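(* Let $G=(V,E)$ be a finite, simple, connected reflective graph and $x\sim y$. Then $V_x^y$ is convex, and the subgraph induced on $V_x^y$ is reflective.
   Context: $d$ is the combinatorial distance. For adjacent $x\sim y$ let $V_x^y=\{v: d(v,x)<d(v,y)\}$, $V^{xy}=\{v:d(v,x)=d(v,y)\}$. A reflection from $x$ to $y$ is a graph automorphism $\phi$ with $\phi\circ\phi=\mathrm{id}$, $\phi(x)=y$, such that the edges between $V_x^y$ and $V_y^x$ are exactly $\{\{x',\phi(x')\}:x'\in V_x^y\}$ and $\phi$ fixes $V^{xy}$ pointwise. A graph is reflective if every edge admits a reflection. A set $W\subseteq V$ is convex if every shortest path in $G$ whose first and last vertices lie in $W$ has all its vertices in $W$. *)

theory Defs
  imports Main
begin

definition simple_graph :: "'a set \<Rightarrow> ('a \<Rightarrow> 'a \<Rightarrow> bool) \<Rightarrow> bool" where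
  "simple_graph V E \<longleftrightarrow> finite V \<and> (\<forall>u v. E u v \<longrightarrow> u \<in> V \<and> v \<in> V)
     \<and> (\<forall>u v. E u v \<longrightarrow> E v u) \<and> (\<forall>u. \<not> E u u)"

definition walk :: "'a set \<Rightarrow> ('a \<Rightarrow> 'a \<Rightarrow> bool) \<Rightarrow> 'a list \<Rightarrow> bool" where
  "walk V E p \<longleftrightarrow> p \<noteq> [] \<and> set p \<subseteq> V \<and> (\<forall>i. Suc i < length p \<longrightarrow> E (p ! i) (p ! Suc i))"

definition connected_graph :: "'a set \<Rightarrow> ('a \<Rightarrow> 'a \<Rightarrow> bool) \<Rightarrow> bool" where
  "connected_graph V E \<longleftrightarrow> V \<noteq> {} \<and>
     (\<forall>u\<in>V. \<forall>v\<in>V. \<exists>p. walk V E p \<and> hd p = u \<and> last p = v)"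

definition gdist :: "'a set \<Rightarrow> ('a \<Rightarrow> 'a \<Rightarrow> bool) \<Rightarrow> 'a \<Rightarrow> 'a \<Rightarrow> nat" where
  "gdist V E u v = (LEAST n. \<exists>p. walk V E p \<and> hd p = u \<and> last p = v \<and> length p = Suc n)"

definition shortest_path :: "'a set \<Rightarrow> ('a \<Rightarrow> 'a \<Rightarrow> bool) \<Rightarrow> 'a list \<Rightarrow> bool" where
  "shortest_path V E p \<longleftrightarrow> walk V E p \<and> length p = Suc (gdist V E (hd p) (last p))"

definition convex_set :: "'a set \<Rightarrow> ('a \<Rightarrow> 'a \<Rightarrow> bool) \<Rightarrow> 'a set \<Rightarrow> bool" where
  "convex_set V E W \<longleftrightarrow> W \<subseteq> V \<and>
     (\<forall>p. shortest_path V E p \<and> hd p \<in> W \<and> last p \<in> W \<longrightarrow> set p \<subseteq> W)"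

definition halfspace :: "'a set \<Rightarrow> ('a \<Rightarrow> 'a \<Rightarrow> bool) \<Rightarrow> 'a \<Rightarrow> 'a \<Rightarrow> 'a set" where
  "halfspace V E x y = {v \<in> V. gdist V E v x < gdist V E v y}"

definition midset :: "'a set \<Rightarrow> ('a \<Rightarrow> 'a \<Rightarrow> bool) \<Rightarrow> 'a \<Rightarrow> 'a \<Rightarrow> 'a set" where
  "midset V E x y = {v \<in> V. gdist V E v x = gdist V E v y}"

definition graph_automorphism :: "'a set \<Rightarrow> ('a \<Rightarrow> 'a \<Rightarrow> bool) \<Rightarrow> ('a \<Rightarrow> 'a) \<Rightarrow> bool" where
  "graph_automorphism V E \<phi> \<longleftrightarrow> bij_betw \<phi> V V \<and>
     (\<forall>u\<in>V. \<forall>v\<in>V. E u v \<longleftrightarrow> E (\<phi> u) (\<phi> v))"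

definition reflection :: "'a set \<Rightarrow> ('a \<Rightarrow> 'a \<Rightarrow> bool) \<Rightarrow> 'a \<Rightarrow> 'a \<Rightarrow> ('a \<Rightarrow> 'a) \<Rightarrow> bool" where
  "reflection V E x y \<phi> \<longleftrightarrow> graph_automorphism V E \<phi> \<and> (\<forall>v\<in>V. \<phi> (\<phi> v) = v) \<and> \<phi> x = y
     \<and> {{u, v} | u v. u \<in> halfspace V E x y \<and> v \<in> halfspace V E y x \<and> E u v}
        = {{u, \<phi> u} | u. u \<in> halfspace V E x y}
     \<and> (\<forall>v\<in>midset V E x y. \<phi> v = v)"

definition reflective :: "'a set \<Rightarrow> ('a \<Rightarrow> 'a \<Rightarrow> bool) \<Rightarrow> bool" where
  "reflective V E \<longleftrightarrow> (\<forall>x\<in>V. \<forall>y\<in>V. E x y \<longrightarrow> (\<exists>\<phi>. reflection V E x y \<phi>))"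

definition induced :: "('a \<Rightarrow> 'a \<Rightarrow> bool) \<Rightarrow> 'a set \<Rightarrow> 'a \<Rightarrow> 'a \<Rightarrow> bool" where
  "induced E W u v \<longleftrightarrow> E u v \<and> u \<in> W \<and> v \<in> W"

end

theory Submission
  imports Defs
begin


locale cg =
  fixes V :: "'a set" and E :: "'a \<Rightarrow> 'a \<Rightarrow> bool"
  assumes sg: "simple_graph V E" and cn: "connected_graph V E"
begin

abbreviation d where "d \<equiv> gdist V E"

lemma E_V: "E u v \<Longrightarrow> u \<in> V \<and> v \<in> V" using sg unfolding simple_graph_def by blast
lemma E_sym: "E u v \<Longrightarrow> E v u" using sg unfolding simple_graph_def by blast
lemma E_irr: "\<not> E u u" using sg unfolding simple_graph_def by blast

lemma walk_single[simp]: "walk V E [v] \<longleftrightarrow> v \<in> V" unfolding walk_def by auto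

lemma walk_Cons2: "walk V E (u # v # p) \<longleftrightarrow> u \<in> V \<and> E u v \<and> walk V E (v # p)"
proof
  assume w: "walk V E (u # v # p)"
  have "Suc 0 < length (u # v # p)" by simp
  then have "E ((u # v # p) ! 0) ((u # v # p) ! Suc 0)" using w unfolding walk_def by blast
  then have "E u v" by simp
  moreover have "walk V E (v # p)" unfolding walk_def
  proof (intro conjI allI impI)
    show "set (v # p) \<subseteq> V" using w unfolding walk_def by auto
    fix i assume "Suc i < length (v # p)"
    then have "Suc (Suc i) < length (u # v # p)" by simp
    then have "E ((u # v # p) ! Suc i) ((u # v # p) ! Suc (Suc i))" using w unfolding walk_def by blast
    then show "E ((v # p) ! i) ((v # p) ! Suc i)" by simp
  qed simp
  ultimately show "u \<in> V \<and> E u v \<and> walk V E (v # p)" using w unfolding walk_def by auto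
next
  assume h: "u \<in> V \<and> E u v \<and> walk V E (v # p)"
  show "walk V E (u # v # p)" unfolding walk_def
  proof (intro conjI allI impI)
    show "set (u # v # p) \<subseteq> V" using h unfolding walk_def by auto
    fix i assume i: "Suc i < length (u # v # p)"
    show "E ((u # v # p) ! i) ((u # v # p) ! Suc i)"
    proof (cases i)
      case 0 then show ?thesis using h by simp
    next
      case (Suc j)
      then have "Suc j < length (v # p)" using i by simp
      then have "E ((v # p) ! j) ((v # p) ! Suc j)" using h unfolding walk_def by blast
      then show ?thesis using Suc by simp
    qed
  qed simp
qed

lemma walk_ne: "walk V E p \<Longrightarrow> p \<noteq> []" unfolding walk_def by simp
lemma walk_set: "walk V E p \<Longrightarrow> set p \<subseteq> V" unfolding walk_def by simp

lemma walk_append: "walk V E p \<Longrightarrow> walk V E q \<Longrightarrow> last p = hd q \<Longrightarrow> walk V E (p @ tl q)"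
proof (induction p)
  case Nil then show ?case by (simp add: walk_def)
next
  case (Cons a p)
  show ?case
  proof (cases p)
    case Nil
    then have "q = a # tl q" using Cons.prems walk_ne[of q] by (cases q) auto
    then show ?thesis using Cons.prems Nil by (metis append_Cons append_Nil)
  next
    case (Cons b p')
    have w: "a \<in> V \<and> E a b \<and> walk V E (b # p')" using Cons.prems(1) Cons walk_Cons2 by simp
    have "walk V E (p @ tl q)" using Cons.IH w Cons.prems Cons by simp
    then show ?thesis using w Cons by (simp add: walk_Cons2)
  qed
qed

lemma walk_take: assumes "walk V E p" "i < length p" shows "walk V E (take (Suc i) p)"
  using assms unfolding walk_def by (auto dest: in_set_takeD)

lemma walk_drop: assumes "walk V E p" "i < length p" shows "walk V E (drop i p)"
  using assms unfolding walk_def by (auto dest: in_set_dropD)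

lemma walk_map:
  assumes "\<And>v. v \<in> V \<Longrightarrow> f v \<in> V" "\<And>u v. u \<in> V \<Longrightarrow> v \<in> V \<Longrightarrow> E u v \<Longrightarrow> E (f u) (f v)"
    and "walk V E p"
  shows "walk V E (map f p)"
  using assms unfolding walk_def by (auto simp: subset_iff)

lemma walk_rev: assumes "walk V E p" shows "walk V E (rev p)"
  unfolding walk_def
proof (intro conjI allI impI)
  show "rev p \<noteq> []" "set (rev p) \<subseteq> V" using assms unfolding walk_def by auto
  fix i assume i: "Suc i < length (rev p)"
  let ?n = "length p"
  have a: "Suc (?n - Suc (Suc i)) < ?n" using i by simp
  have "E (p ! (?n - Suc (Suc i))) (p ! Suc (?n - Suc (Suc i)))" using assms a unfolding walk_def by blast
  moreover have "Suc (?n - Suc (Suc i)) = ?n - Suc i" using i by simp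
  ultimately have "E (p ! (?n - Suc i)) (p ! (?n - Suc (Suc i)))" using E_sym by metis
  then show "E (rev p ! i) (rev p ! Suc i)" using i by (simp add: rev_nth)
qed

end



context cg begin

lemma ex_walk: "u \<in> V \<Longrightarrow> v \<in> V \<Longrightarrow> \<exists>p. walk V E p \<and> hd p = u \<and> last p = v"
  using cn unfolding connected_graph_def by blast

lemma dist_le: assumes "walk V E p" "hd p = u" "last p = v" shows "d u v \<le> length p - 1"
proof -
  have "length p = Suc (length p - 1)" using walk_ne[OF assms(1)] by (cases p) auto
  then have "\<exists>q. walk V E q \<and> hd q = u \<and> last q = v \<and> length q = Suc (length p - 1)"
    using assms by blast
  then show ?thesis unfolding gdist_def by (rule Least_le)
qed

lemma dist_ex: assumes "u \<in> V" "v \<in> V"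
  shows "\<exists>p. walk V E p \<and> hd p = u \<and> last p = v \<and> length p = Suc (d u v)"
proof -
  obtain p where p: "walk V E p" "hd p = u" "last p = v" using ex_walk assms by blast
  have "length p = Suc (length p - 1)" using walk_ne[OF p(1)] by (cases p) auto
  then have "\<exists>n q. walk V E q \<and> hd q = u \<and> last q = v \<and> length q = Suc n" using p by blast
  then show ?thesis unfolding gdist_def by (rule LeastI_ex)
qed

lemma dist_self: "v \<in> V \<Longrightarrow> d v v = 0"
  using dist_le[of "[v]" v v] by simp

lemma dist_eq0: assumes "u \<in> V" "v \<in> V" "d u v = 0" shows "u = v"
proof -
  obtain p where p: "walk V E p" "hd p = u" "last p = v" "length p = Suc 0"
    using dist_ex[OF assms(1,2)] assms(3) by auto
  then obtain a where "p = [a]" by (cases p) auto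
  then show ?thesis using p by simp
qed

lemma dist_sym_le: assumes "u \<in> V" "v \<in> V" shows "d v u \<le> d u v"
proof -
  obtain p where p: "walk V E p" "hd p = u" "last p = v" "length p = Suc (d u v)"
    using dist_ex[OF assms] by blast
  have "walk V E (rev p)" using walk_rev p by simp
  moreover have "hd (rev p) = v" "last (rev p) = u" using p walk_ne[OF p(1)]
    by (auto simp: hd_rev last_rev)
  ultimately have "d v u \<le> length (rev p) - 1" using dist_le by blast
  then show ?thesis using p by simp
qed

lemma dist_sym: "u \<in> V \<Longrightarrow> v \<in> V \<Longrightarrow> d u v = d v u"
  using dist_sym_le by (simp add: le_antisym)

lemma dist_tri: assumes "u \<in> V" "v \<in> V" "w \<in> V" shows "d u w \<le> d u v + d v w"
proof -
  obtain p where p: "walk V E p" "hd p = u" "last p = v" "length p = Suc (d u v)"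
    using dist_ex assms by blast
  obtain q where q: "walk V E q" "hd q = v" "last q = w" "length q = Suc (d v w)"
    using dist_ex assms by blast
  have "walk V E (p @ tl q)" using walk_append p q by simp
  moreover have "hd (p @ tl q) = u" using p walk_ne[OF p(1)] by simp
  moreover have "last (p @ tl q) = w"
  proof (cases "tl q")
    case Nil
    then have "q = [v]" using q by (cases q) auto
    then show ?thesis using p q Nil by simp
  next
    case (Cons a l)
    then have "last (tl q) = last q" using q walk_ne[OF q(1)] by (cases q) auto
    then show ?thesis using Cons q by simp
  qed
  ultimately have "d u w \<le> length (p @ tl q) - 1" using dist_le by blast
  then show ?thesis using p q by simp
qed

lemma dist_edge: assumes "E u v" shows "d u v = 1"
proof -
  have uv: "u \<in> V" "v \<in> V" using E_V assms by auto
  have "walk V E [u, v]" using assms uv by (simp add: walk_Cons2)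
  then have "d u v \<le> 1" using dist_le[of "[u,v]" u v] by simp
  moreover have "d u v \<noteq> 0" using dist_eq0[OF uv] assms E_irr by metis
  ultimately show ?thesis by simp
qed

lemma dist_edge_le: assumes "E u v" "w \<in> V" shows "d w v \<le> d w u + 1"
  using dist_tri[of w u v] dist_edge[OF assms(1)] E_V[OF assms(1)] assms(2) by simp

lemma dist_geo_step: assumes "u \<in> V" "v \<in> V" "u \<noteq> v"
  shows "\<exists>w. E u w \<and> Suc (d w v) = d u v"
proof -
  obtain p where p: "walk V E p" "hd p = u" "last p = v" "length p = Suc (d u v)"
    using dist_ex assms by blast
  have "d u v \<noteq> 0" using dist_eq0 assms by blast
  then have l: "Suc 0 < length p" using p by simp
  have e: "E (p ! 0) (p ! Suc 0)" using p(1) l unfolding walk_def by blast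
  have p0: "p ! 0 = u" using p walk_ne[OF p(1)] by (simp add: hd_conv_nth)
  let ?w = "p ! Suc 0"
  have "walk V E (drop 1 p)" using walk_drop p(1) l by simp
  moreover have "hd (drop 1 p) = ?w" using l by (simp add: hd_drop_conv_nth)
  moreover have "last (drop 1 p) = v" using l p by simp
  ultimately have "d ?w v \<le> length (drop 1 p) - 1" using dist_le by blast
  then have le: "d ?w v \<le> d u v - 1" using p by simp
  have wV: "?w \<in> V" using E_V e by blast
  have "d u v \<le> d u ?w + d ?w v" using dist_tri assms wV by blast
  moreover have "d u ?w = 1" using dist_edge e p0 by simp
  ultimately have "Suc (d ?w v) = d u v" using le \<open>d u v \<noteq> 0\<close> by linarith
  then show ?thesis using e p0 by auto
qed

lemma dist_map_le:
  assumes f1: "\<And>v. v \<in> V \<Longrightarrow> f v \<in> V"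
    and f2: "\<And>u v. u \<in> V \<Longrightarrow> v \<in> V \<Longrightarrow> E u v \<Longrightarrow> E (f u) (f v)"
    and "a \<in> V" "b \<in> V"
  shows "d (f a) (f b) \<le> d a b"
proof -
  obtain p where p: "walk V E p" "hd p = a" "last p = b" "length p = Suc (d a b)"
    using dist_ex assms by blast
  have "walk V E (map f p)" by (rule walk_map) (use f1 f2 p(1) in auto)
  moreover have "hd (map f p) = f a" "last (map f p) = f b" using p walk_ne[OF p(1)]
    by (auto simp: hd_map last_map)
  ultimately have "d (f a) (f b) \<le> length (map f p) - 1" using dist_le by blast
  then show ?thesis using p by simp
qed

end



context cg begin

lemma hs_iff: "w \<in> halfspace V E u v \<longleftrightarrow> w \<in> V \<and> d w u < d w v"
  unfolding halfspace_def by simp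
lemma mid_iff: "w \<in> midset V E u v \<longleftrightarrow> w \<in> V \<and> d w u = d w v"
  unfolding midset_def by simp

context
  fixes u v \<rho> assumes R: "reflection V E u v \<rho>" and uv: "E u v"
begin

lemma rf_all: "graph_automorphism V E \<rho> \<and> (\<forall>w\<in>V. \<rho> (\<rho> w) = w) \<and> \<rho> u = v
     \<and> {{a, b} | a b. a \<in> halfspace V E u v \<and> b \<in> halfspace V E v u \<and> E a b}
        = {{a, \<rho> a} | a. a \<in> halfspace V E u v}
     \<and> (\<forall>w\<in>midset V E u v. \<rho> w = w)"
  using R unfolding reflection_def .

lemma rf_aut: "graph_automorphism V E \<rho>" using rf_all[THEN conjunct1] .
lemma rf_V: "w \<in> V \<Longrightarrow> \<rho> w \<in> V"
  using rf_aut unfolding graph_automorphism_def bij_betw_def by blast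
lemma rf_inv: "w \<in> V \<Longrightarrow> \<rho> (\<rho> w) = w"
  using rf_all[THEN conjunct2, THEN conjunct1] by blast
lemma rf_E: "a \<in> V \<Longrightarrow> b \<in> V \<Longrightarrow> E a b \<Longrightarrow> E (\<rho> a) (\<rho> b)"
  using rf_aut unfolding graph_automorphism_def by blast
lemma rf_E_iff: "a \<in> V \<Longrightarrow> b \<in> V \<Longrightarrow> E (\<rho> a) (\<rho> b) \<longleftrightarrow> E a b"
  using rf_aut unfolding graph_automorphism_def by blast
lemma rf_dist: assumes "a \<in> V" "b \<in> V" shows "d (\<rho> a) (\<rho> b) = d a b"
proof -
  have 1: "d (\<rho> a) (\<rho> b) \<le> d a b" by (rule dist_map_le) (use rf_V rf_E assms in auto)
  have "d (\<rho> (\<rho> a)) (\<rho> (\<rho> b)) \<le> d (\<rho> a) (\<rho> b)" by (rule dist_map_le) (use rf_V rf_E assms in auto)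
  then show ?thesis using 1 rf_inv assms by simp
qed
lemma rf_u: "\<rho> u = v" using rf_all[THEN conjunct2, THEN conjunct2, THEN conjunct1] .
lemma rf_v: "\<rho> v = u" using rf_u rf_inv[of u] E_V[OF uv] by simp

lemma rf_swap: assumes "w \<in> halfspace V E u v" shows "\<rho> w \<in> halfspace V E v u"
proof -
  have w: "w \<in> V" "d w u < d w v" using assms hs_iff by auto
  have uvV: "u \<in> V" "v \<in> V" using E_V uv by auto
  have "d (\<rho> w) v = d w u" using rf_dist[of w u] w uvV rf_u by simp
  moreover have "d (\<rho> w) u = d w v" using rf_dist[of w v] w uvV rf_v by simp
  ultimately show ?thesis using w rf_V hs_iff by auto
qed

lemma rf_swap': assumes "w \<in> halfspace V E v u" shows "\<rho> w \<in> halfspace V E u v"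
proof -
  have w: "w \<in> V" "d w v < d w u" using assms hs_iff by auto
  have uvV: "u \<in> V" "v \<in> V" using E_V uv by auto
  have "d (\<rho> w) v = d w u" using rf_dist[of w u] w uvV rf_u by simp
  moreover have "d (\<rho> w) u = d w v" using rf_dist[of w v] w uvV rf_v by simp
  ultimately show ?thesis using w rf_V hs_iff by auto
qed

lemma rf_mid: "w \<in> midset V E u v \<Longrightarrow> \<rho> w = w"
  using rf_all[THEN conjunct2, THEN conjunct2, THEN conjunct2, THEN conjunct2] by blast

lemma rf_sets: "{{a, b} | a b. a \<in> halfspace V E u v \<and> b \<in> halfspace V E v u \<and> E a b}
        = {{a, \<rho> a} | a. a \<in> halfspace V E u v}"
  using rf_all[THEN conjunct2, THEN conjunct2, THEN conjunct2, THEN conjunct1] .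

lemma rf_match: assumes "w \<in> halfspace V E u v" shows "E w (\<rho> w)"
proof -
  have "{w, \<rho> w} \<in> {{a, \<rho> a} | a. a \<in> halfspace V E u v}" using assms by blast
  then have "{w, \<rho> w} \<in> {{a, b} | a b. a \<in> halfspace V E u v \<and> b \<in> halfspace V E v u \<and> E a b}"
    using rf_sets by simp
  then obtain a b where "{w, \<rho> w} = {a, b}" "E a b" by blast
  then show ?thesis using E_sym by (auto simp: doubleton_eq_iff)
qed

lemma rf_match': assumes "w \<in> halfspace V E v u" shows "E w (\<rho> w)"
proof -
  have "E (\<rho> w) (\<rho> (\<rho> w))" using rf_match rf_swap' assms by blast
  then show ?thesis using rf_inv assms hs_iff E_sym by auto
qed

lemma rf_cross: assumes "a \<in> halfspace V E u v" "b \<in> halfspace V E v u" "E a b"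
  shows "b = \<rho> a"
proof -
  have "{a, b} \<in> {{a, b} | a b. a \<in> halfspace V E u v \<and> b \<in> halfspace V E v u \<and> E a b}"
    using assms by blast
  then have "{a, b} \<in> {{a, \<rho> a} | a. a \<in> halfspace V E u v}" using rf_sets by simp
  then obtain w where w: "{a, b} = {w, \<rho> w}" "w \<in> halfspace V E u v" by blast
  have "b \<noteq> w" using w(2) assms(2) hs_iff by auto
  then show ?thesis using w by (auto simp: doubleton_eq_iff)
qed

lemma rf_cross': assumes "a \<in> halfspace V E v u" "b \<in> halfspace V E u v" "E a b"
  shows "b = \<rho> a"
proof -
  have "a = \<rho> b" using rf_cross[of b a] assms E_sym by blast
  then show ?thesis using rf_inv assms hs_iff by auto
qed

end
end




locale rg = cg + assumes rf: "reflective V E"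
begin

lemma ex_refl: "E u v \<Longrightarrow> \<exists>\<rho>. reflection V E u v \<rho>"
  using rf E_V unfolding reflective_def by blast

context
  fixes x y \<phi> assumes R: "reflection V E x y \<phi>" and xy: "E x y"
begin

lemma A_y: assumes "a \<in> halfspace V E x y" shows "d a y = Suc (d a x)"
  using assms dist_edge_le[OF xy, of a] hs_iff by auto

lemma star: assumes "a \<in> halfspace V E x y" "a \<noteq> x"
  shows "\<exists>a'. E a a' \<and> a' \<in> halfspace V E x y \<and> Suc (d a' x) = d a x"
proof -
  have aV: "a \<in> V" and xV: "x \<in> V" and yV: "y \<in> V" using assms hs_iff E_V xy by auto
  obtain w where w: "E a w" "Suc (d w x) = d a x" using dist_geo_step[OF aV xV assms(2)] by blast
  have wV: "w \<in> V" using E_V w by auto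
  have "d a y \<le> d w y + 1" using dist_edge_le[OF E_sym[OF w(1)] yV] dist_sym aV wV yV by simp
  then have "d w x < d w y" using A_y[OF assms(1)] w by simp
  then show ?thesis using w wV hs_iff by blast
qed

lemma claimC: assumes p: "p \<in> halfspace V E x y" and q: "q \<in> halfspace V E x y"
  shows "d p q < d p (\<phi> q)"
proof -
  have xV: "x \<in> V" and yV: "y \<in> V" using E_V xy by auto
  have qV: "q \<in> V" using q hs_iff by auto
  have eq: "E q (\<phi> q)" using rf_match[OF R xy q] .
  obtain \<rho> where Rr: "reflection V E q (\<phi> q) \<rho>" using ex_refl[OF eq] by blast
  have fqV: "\<phi> q \<in> V" using E_V eq by auto
  have phx: "\<phi> x = y" using rf_u[OF R xy] .
  have phy: "\<phi> y = x" using rf_v[OF R xy] .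
  have dxfq: "d x (\<phi> q) = Suc (d x q)"
  proof -
    have "d x (\<phi> q) = d (\<phi> x) (\<phi> (\<phi> q))" using rf_dist[OF R xy xV fqV] by simp
    also have "\<dots> = d y q" using phx rf_inv[OF R xy qV] by simp
    also have "\<dots> = d q y" using dist_sym yV qV by simp
    also have "\<dots> = Suc (d q x)" using A_y[OF q] .
    finally show ?thesis using dist_sym xV qV by simp
  qed
  have xA: "x \<in> halfspace V E q (\<phi> q)" using dxfq xV hs_iff by simp
  have dyfq: "d y (\<phi> q) = d x q"
    using rf_dist[OF R xy xV qV] phx by simp
  have dyq: "d y q = Suc (d x q)" using A_y[OF q] dist_sym xV yV qV by simp
  have yB: "y \<in> halfspace V E (\<phi> q) q" using dyfq dyq yV hs_iff by simp
  have rx: "\<rho> x = y" using rf_cross[OF Rr eq xA yB xy] by simp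
  have ry: "\<rho> y = x" using rx rf_inv[OF Rr eq xV] by simp
  have rAB: "\<rho> w \<in> halfspace V E y x" if w: "w \<in> halfspace V E x y" for w
  proof -
    have wV: "w \<in> V" using w hs_iff by auto
    have "d (\<rho> w) y = d w x" using rf_dist[OF Rr eq wV xV] rx by simp
    moreover have "d (\<rho> w) x = d w y" using rf_dist[OF Rr eq wV yV] ry by simp
    ultimately show ?thesis using w hs_iff rf_V[OF Rr eq wV] by auto
  qed
  have notM: "w \<notin> midset V E q (\<phi> q)" if w: "w \<in> halfspace V E x y" for w
  proof
    assume "w \<in> midset V E q (\<phi> q)"
    then have "\<rho> w = w" using rf_mid[OF Rr eq] by blast
    then show False using rAB[OF w] w hs_iff by auto
  qed
  have stepA: "w' \<in> halfspace V E q (\<phi> q)"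
    if w: "w \<in> halfspace V E x y" "w' \<in> halfspace V E x y" "E w w'" "w \<in> halfspace V E q (\<phi> q)"
    for w w'
  proof (rule ccontr)
    assume nA: "w' \<notin> halfspace V E q (\<phi> q)"
    have w'V: "w' \<in> V" using w hs_iff by auto
    have "w' \<notin> midset V E q (\<phi> q)" using notM w by blast
    then have "w' \<in> halfspace V E (\<phi> q) q" using nA w'V hs_iff mid_iff by auto
    then have "w' = \<rho> w" using rf_cross[OF Rr eq w(4)] w(3) by blast
    then show False using rAB[OF w(1)] w(2) hs_iff by auto
  qed
  have main: "\<forall>w. w \<in> halfspace V E x y \<and> d w x = n \<longrightarrow> w \<in> halfspace V E q (\<phi> q)" for n
  proof (induction n)
    case 0
    then show ?case using dist_eq0 xV hs_iff xA by blast
  next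
    case (Suc n)
    show ?case
    proof (intro allI impI)
      fix w assume w: "w \<in> halfspace V E x y \<and> d w x = Suc n"
      have "w \<noteq> x" using w dist_self xV by auto
      then obtain w' where w': "E w w'" "w' \<in> halfspace V E x y" "Suc (d w' x) = d w x"
        using star w by blast
      have "w' \<in> halfspace V E q (\<phi> q)" using Suc.IH w' w by simp
      then show "w \<in> halfspace V E q (\<phi> q)" using stepA[of w' w] w' w E_sym by blast
    qed
  qed
  have "p \<in> halfspace V E q (\<phi> q)" using main p by blast
  then show ?thesis using hs_iff by simp
qed

end
end



context cg begin

lemma dist_one: assumes "a \<in> V" "b \<in> V" "d a b = 1" shows "E a b"
proof -
  have "a \<noteq> b" using assms dist_self by auto
  then obtain w where w: "E a w" "Suc (d w b) = d a b" using dist_geo_step assms by blast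
  then have "d w b = 0" using assms by simp
  then have "w = b" using dist_eq0 E_V w assms by blast
  then show ?thesis using w by simp
qed

lemma path_split: assumes sp: "shortest_path V E p" and c: "c \<in> set p"
  shows "d (hd p) c + d c (last p) = d (hd p) (last p)"
proof -
  have w: "walk V E p" and len: "length p = Suc (d (hd p) (last p))"
    using sp unfolding shortest_path_def by auto
  have ne: "p \<noteq> []" using walk_ne w by blast
  obtain i where i: "i < length p" "c = p ! i" using c by (metis in_set_conv_nth)
  have hV: "hd p \<in> V" "last p \<in> V" "c \<in> V" using walk_set[OF w] ne c by auto
  have t1: "walk V E (take (Suc i) p)" using walk_take w i by blast
  have t2: "hd (take (Suc i) p) = hd p" using ne by simp
  have t3: "last (take (Suc i) p) = c" using i by (simp add: take_Suc_conv_app_nth)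
  have "d (hd p) c \<le> length (take (Suc i) p) - 1" using dist_le[OF t1 t2 t3] .
  then have le1: "d (hd p) c \<le> i" using i by simp
  have s1: "walk V E (drop i p)" using walk_drop w i by blast
  have s2: "hd (drop i p) = c" using i by (simp add: hd_drop_conv_nth)
  have s3: "last (drop i p) = last p" using i by simp
  have "d c (last p) \<le> length (drop i p) - 1" using dist_le[OF s1 s2 s3] .
  then have le2: "d c (last p) \<le> length p - Suc i" using i by simp
  have "d (hd p) (last p) \<le> d (hd p) c + d c (last p)" using dist_tri hV by blast
  then show ?thesis using le1 le2 len i by linarith
qed

context
  fixes u v \<rho> assumes R: "reflection V E u v \<rho>" and uv: "E u v"
begin

lemma rf_same_side1: assumes "a \<in> halfspace V E u v" "b \<in> halfspace V E u v" "E a b"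
  shows "\<rho> a \<noteq> b \<and> \<not> E (\<rho> a) b"
proof -
  have ra: "\<rho> a \<in> halfspace V E v u" using rf_swap[OF R uv assms(1)] .
  have "\<rho> a \<noteq> b" using ra assms(2) hs_iff by auto
  moreover have "\<not> E (\<rho> a) b"
  proof
    assume "E (\<rho> a) b"
    then have "b = \<rho> (\<rho> a)" using rf_cross'[OF R uv ra assms(2)] by blast
    then have "b = a" using rf_inv[OF R uv] assms hs_iff by auto
    then show False using assms(3) E_irr by simp
  qed
  ultimately show ?thesis by blast
qed

lemma rf_same_side2: assumes "a \<in> halfspace V E v u" "b \<in> halfspace V E v u" "E a b"
  shows "\<rho> a \<noteq> b \<and> \<not> E (\<rho> a) b"
proof -
  have ra: "\<rho> a \<in> halfspace V E u v" using rf_swap'[OF R uv assms(1)] .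
  have "\<rho> a \<noteq> b" using ra assms(2) hs_iff by auto
  moreover have "\<not> E (\<rho> a) b"
  proof
    assume "E (\<rho> a) b"
    then have "b = \<rho> (\<rho> a)" using rf_cross[OF R uv ra assms(2)] by blast
    then have "b = a" using rf_inv[OF R uv] assms hs_iff by auto
    then show False using assms(3) E_irr by simp
  qed
  ultimately show ?thesis by blast
qed

end
end

context rg begin

context
  fixes x y \<phi> assumes R: "reflection V E x y \<phi>" and xy: "E x y"
begin

lemma convex: "convex_set V E (halfspace V E x y)"
  unfolding convex_set_def
proof (intro conjI allI impI subsetI)
  show "w \<in> V" if "w \<in> halfspace V E x y" for w using that hs_iff by auto
next
  fix p c assume h: "shortest_path V E p \<and> hd p \<in> halfspace V E x y \<and> last p \<in> halfspace V E x y"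
    and c: "c \<in> set p"
  let ?h = "hd p" and ?l = "last p"
  have w: "walk V E p" using h unfolding shortest_path_def by auto
  have cV: "c \<in> V" using walk_set[OF w] c by auto
  have hA: "?h \<in> halfspace V E x y" and lA: "?l \<in> halfspace V E x y" using h by auto
  have hV: "?h \<in> V" and lV: "?l \<in> V" using hA lA hs_iff by auto
  have split: "d ?h c + d c ?l = d ?h ?l" using path_split h c by blast
  show "c \<in> halfspace V E x y"
  proof (cases "d c x < d c y")
    case True then show ?thesis using cV hs_iff by auto
  next
    case False
    show ?thesis
    proof (cases "d c y < d c x")
      case True
      then have cB: "c \<in> halfspace V E y x" using cV hs_iff by auto
      let ?c = "\<phi> c"
      have c'A: "?c \<in> halfspace V E x y" using rf_swap'[OF R xy cB] .
      have c'V: "?c \<in> V" using c'A hs_iff by auto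
      have pc: "\<phi> ?c = c" using rf_inv[OF R xy cV] .
      have 1: "d ?h ?c < d ?h c" using claimC[OF R xy hA c'A] pc by simp
      have 2: "d ?l ?c < d ?l c" using claimC[OF R xy lA c'A] pc by simp
      have "d ?h ?l \<le> d ?h ?c + d ?c ?l" using dist_tri hV lV c'V by blast
      moreover have "d ?c ?l = d ?l ?c" "d c ?l = d ?l c" using dist_sym lV c'V cV by auto
      ultimately show ?thesis using 1 2 split by linarith
    next
      case False
      then have cM: "c \<in> midset V E x y" using \<open>\<not> d c x < d c y\<close> cV mid_iff by auto
      have pc: "\<phi> c = c" using rf_mid[OF R xy cM] .
      have fl: "\<phi> ?l \<in> V" using rf_V[OF R xy lV] .
      have 1: "d ?h ?l < d ?h (\<phi> ?l)" using claimC[OF R xy hA lA] .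
      have "d ?h (\<phi> ?l) \<le> d ?h c + d c (\<phi> ?l)" using dist_tri hV fl cV by blast
      moreover have "d c (\<phi> ?l) = d c ?l" using rf_dist[OF R xy cV lV] pc by simp
      ultimately show ?thesis using 1 split by linarith
    qed
  qed
qed

abbreviation "HA \<equiv> halfspace V E x y"
abbreviation "EA \<equiv> induced E (halfspace V E x y)"

lemma walkA_walk: "walk HA EA q \<Longrightarrow> walk V E q"
  unfolding walk_def induced_def using hs_iff by auto

lemma dist_induced: assumes a: "a \<in> HA" and b: "b \<in> HA"
  shows "gdist HA EA a b = d a b"
proof -
  have aV: "a \<in> V" and bV: "b \<in> V" using a b hs_iff by auto
  obtain p where p: "walk V E p" "hd p = a" "last p = b" "length p = Suc (d a b)"
    using dist_ex[OF aV bV] by blast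
  have sp: "shortest_path V E p" using p unfolding shortest_path_def by simp
  have "set p \<subseteq> HA" using convex sp p a b unfolding convex_set_def by blast
  then have pA: "walk HA EA p" using p(1) unfolding walk_def induced_def by (auto simp: subset_iff)
  then have ex: "\<exists>q. walk HA EA q \<and> hd q = a \<and> last q = b \<and> length q = Suc (d a b)" using p by blast
  have le1: "gdist HA EA a b \<le> d a b" unfolding gdist_def[of HA EA a b] using ex by (rule Least_le)
  have "\<exists>n q. walk HA EA q \<and> hd q = a \<and> last q = b \<and> length q = Suc n" using ex by blast
  then have "\<exists>q. walk HA EA q \<and> hd q = a \<and> last q = b \<and> length q = Suc (gdist HA EA a b)"
    unfolding gdist_def[of HA EA a b] by (rule LeastI_ex)
  then obtain q where q: "walk HA EA q" "hd q = a" "last q = b" "length q = Suc (gdist HA EA a b)"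
    by blast
  have "d a b \<le> length q - 1" using dist_le[OF walkA_walk[OF q(1)] q(2,3)] .
  then show ?thesis using le1 q(4) by simp
qed

lemma hs_induced: assumes "u \<in> HA" "v \<in> HA"
  shows "halfspace HA EA u v = halfspace V E u v \<inter> HA"
  unfolding halfspace_def[of HA EA u v] using dist_induced assms by (auto simp: hs_iff)

lemma mid_induced: assumes "u \<in> HA" "v \<in> HA"
  shows "midset HA EA u v = midset V E u v \<inter> HA"
  unfolding midset_def[of HA EA u v] using dist_induced assms by (auto simp: hs_iff mid_iff)

end
end



context rg begin

context
  fixes x y \<phi> assumes R: "reflection V E x y \<phi>" and xy: "E x y"
begin

lemma sigma_pres:
  assumes u: "u \<in> (HA x y)" and v: "v \<in> (HA x y)" and uv: "E u v" and Rs: "reflection V E u v \<sigma>"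
    and w: "w \<in> (HA x y)"
  shows "\<sigma> w \<in> (HA x y)"
proof -
  have xV: "x \<in> V" and yV: "y \<in> V" using E_V xy by auto
  have uV: "u \<in> V" and vV: "v \<in> V" using u v hs_iff by auto
  have wV: "w \<in> V" using w hs_iff by auto
  have swV: "\<sigma> w \<in> V" using rf_V[OF Rs uv wV] .
  have duy: "d x u + 1 = d y u" using A_y[OF R xy u] dist_sym uV xV yV by simp
  have dvy: "d x v + 1 = d y v" using A_y[OF R xy v] dist_sym vV xV yV by simp
  have wxy: "d w x < d w y" using w hs_iff by auto
  show ?thesis
  proof (cases "d x u = d x v")
    case True
    then have xM: "x \<in> midset V E u v" and yM: "y \<in> midset V E u v"
      using duy dvy xV yV mid_iff by auto
    have sx: "\<sigma> x = x" using rf_mid[OF Rs uv xM] .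
    have sy: "\<sigma> y = y" using rf_mid[OF Rs uv yM] .
    have "d (\<sigma> w) x = d w x" using rf_dist[OF Rs uv wV xV] sx by simp
    moreover have "d (\<sigma> w) y = d w y" using rf_dist[OF Rs uv wV yV] sy by simp
    ultimately show ?thesis using wxy swV hs_iff by auto
  next
    case False
    let ?q = "\<sigma> x" and ?r = "\<sigma> y"
    have props: "E x ?q \<and> E y ?r \<and> ?q \<noteq> y \<and> \<not> E ?q y \<and> ?r \<noteq> x \<and> \<not> E ?r x"
    proof (cases "d x u < d x v")
      case True
      then have xA: "x \<in> halfspace V E u v" and yA: "y \<in> halfspace V E u v"
        using duy dvy xV yV hs_iff by auto
      show ?thesis using rf_match[OF Rs uv xA] rf_match[OF Rs uv yA]
        rf_same_side1[OF Rs uv xA yA xy] rf_same_side1[OF Rs uv yA xA E_sym[OF xy]] by blast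
    next
      case False
      then have xA: "x \<in> halfspace V E v u" and yA: "y \<in> halfspace V E v u"
        using duy dvy xV yV hs_iff \<open>d x u \<noteq> d x v\<close> by auto
      show ?thesis using rf_match'[OF Rs uv xA] rf_match'[OF Rs uv yA]
        rf_same_side2[OF Rs uv xA yA xy] rf_same_side2[OF Rs uv yA xA E_sym[OF xy]] by blast
    qed
    have qV: "?q \<in> V" and rV: "?r \<in> V" using rf_V[OF Rs uv] xV yV by auto
    have "d ?q y \<noteq> 0" using props dist_eq0 qV yV by blast
    moreover have "d ?q y \<noteq> 1" using props dist_one qV yV by blast
    moreover have "d ?q x = 1" using props dist_edge E_sym by blast
    ultimately have qA: "?q \<in> halfspace V E x y" using qV hs_iff by auto
    have "d ?r x \<noteq> 0" using props dist_eq0 rV xV by blast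
    moreover have "d ?r x \<noteq> 1" using props dist_one rV xV by blast
    moreover have "d ?r y = 1" using props dist_edge E_sym by blast
    ultimately have rB: "?r \<in> halfspace V E y x" using rV hs_iff by auto
    have "E ?q ?r" using rf_E[OF Rs uv xV yV xy] .
    then have rq: "?r = \<phi> ?q" using rf_cross[OF R xy qA rB] by blast
    have 1: "d (\<sigma> w) ?q = d w x" using rf_dist[OF Rs uv wV xV] .
    have 2: "d (\<sigma> w) (\<phi> ?q) = d w y" using rf_dist[OF Rs uv wV yV] rq by simp
    have fqV: "\<phi> ?q \<in> V" using rf_V[OF R xy qV] .
    show ?thesis
    proof (rule ccontr)
      assume nA: "\<sigma> w \<notin> (HA x y)"
      show False
      proof (cases "d (\<sigma> w) y < d (\<sigma> w) x")
        case True
        then have sB: "\<sigma> w \<in> halfspace V E y x" using swV hs_iff by auto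
        let ?z = "\<phi> (\<sigma> w)"
        have zA: "?z \<in> (HA x y)" using rf_swap'[OF R xy sB] .
        have c: "d ?z ?q < d ?z (\<phi> ?q)" using claimC[OF R xy zA qA] .
        have "d ?z ?q = d (\<phi> ?z) (\<phi> ?q)" using rf_dist[OF R xy _ qV] zA hs_iff by auto
        also have "\<dots> = d (\<sigma> w) (\<phi> ?q)" using rf_inv[OF R xy swV] by simp
        finally have a: "d ?z ?q = d (\<sigma> w) (\<phi> ?q)" .
        have "d ?z (\<phi> ?q) = d (\<sigma> w) ?q" using rf_dist[OF R xy swV qV] by simp
        then show False using a c 1 2 wxy by simp
      next
        case False
        then have "\<sigma> w \<in> midset V E x y" using nA swV hs_iff mid_iff by auto
        then have "\<phi> (\<sigma> w) = \<sigma> w" using rf_mid[OF R xy] by blast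
        then have "d (\<sigma> w) (\<phi> ?q) = d (\<sigma> w) ?q" using rf_dist[OF R xy swV qV] by simp
        then show False using 1 2 wxy by simp
      qed
    qed
  qed
qed

lemma sub_refl:
  assumes u: "u \<in> (HA x y)" and v: "v \<in> (HA x y)" and uv: "E u v" and Rs: "reflection V E u v \<sigma>"
  shows "reflection (HA x y) (EA x y) u v \<sigma>"
proof -
  have pres: "\<And>w. w \<in> (HA x y) \<Longrightarrow> \<sigma> w \<in> (HA x y)" using sigma_pres[OF u v uv Rs] .
  have inv: "\<And>w. w \<in> (HA x y) \<Longrightarrow> \<sigma> (\<sigma> w) = w" using rf_inv[OF Rs uv] hs_iff by auto
  have bij: "bij_betw \<sigma> (HA x y) (HA x y)"
    by (rule bij_betw_byWitness[where f'=\<sigma>]) (use inv pres in auto)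
  have aut: "graph_automorphism (HA x y) (EA x y) \<sigma>"
    unfolding graph_automorphism_def
  proof (intro conjI bij ballI)
    fix a b assume a: "a \<in> (HA x y)" and b: "b \<in> (HA x y)"
    have "E a b \<longleftrightarrow> E (\<sigma> a) (\<sigma> b)" using rf_E_iff[OF Rs uv] a b hs_iff by auto
    then show "(EA x y) a b \<longleftrightarrow> (EA x y) (\<sigma> a) (\<sigma> b)" unfolding induced_def using a b pres by auto
  qed
  have hs1: "halfspace (HA x y) (EA x y) u v = halfspace V E u v \<inter> (HA x y)" using hs_induced[OF R xy u v] .
  have hs2: "halfspace (HA x y) (EA x y) v u = halfspace V E v u \<inter> (HA x y)" using hs_induced[OF R xy v u] .
  have md: "midset (HA x y) (EA x y) u v = midset V E u v \<inter> (HA x y)" using mid_induced[OF R xy u v] .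
  have sets: "{{a, b} | a b. a \<in> halfspace (HA x y) (EA x y) u v \<and> b \<in> halfspace (HA x y) (EA x y) v u \<and> (EA x y) a b}
        = {{a, \<sigma> a} | a. a \<in> halfspace (HA x y) (EA x y) u v}"
  proof (intro equalityI subsetI)
    fix e assume "e \<in> {{a, b} | a b. a \<in> halfspace (HA x y) (EA x y) u v \<and> b \<in> halfspace (HA x y) (EA x y) v u \<and> (EA x y) a b}"
    then obtain a b where ab: "e = {a, b}" "a \<in> halfspace V E u v" "a \<in> (HA x y)"
      "b \<in> halfspace V E v u" "E a b" using hs1 hs2 unfolding induced_def by blast
    have "b = \<sigma> a" using rf_cross[OF Rs uv ab(2) ab(4) ab(5)] .
    then show "e \<in> {{a, \<sigma> a} | a. a \<in> halfspace (HA x y) (EA x y) u v}" using ab hs1 by blast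
  next
    fix e assume "e \<in> {{a, \<sigma> a} | a. a \<in> halfspace (HA x y) (EA x y) u v}"
    then obtain a where a: "e = {a, \<sigma> a}" "a \<in> halfspace V E u v" "a \<in> (HA x y)" using hs1 by blast
    have "\<sigma> a \<in> halfspace V E v u" using rf_swap[OF Rs uv a(2)] .
    moreover have "\<sigma> a \<in> (HA x y)" using pres a(3) .
    moreover have "E a (\<sigma> a)" using rf_match[OF Rs uv a(2)] .
    ultimately show "e \<in> {{a, b} | a b. a \<in> halfspace (HA x y) (EA x y) u v \<and> b \<in> halfspace (HA x y) (EA x y) v u \<and> (EA x y) a b}"
      using a hs1 hs2 unfolding induced_def by blast
  qed
  have mids: "\<forall>w\<in>midset (HA x y) (EA x y) u v. \<sigma> w = w" using md rf_mid[OF Rs uv] by blast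
  have inv': "\<forall>w\<in>(HA x y). \<sigma> (\<sigma> w) = w" using inv by blast
  show ?thesis unfolding reflection_def
    apply (intro conjI)
        apply (rule aut)
       apply (rule inv')
      apply (rule rf_u[OF Rs uv])
     apply (rule sets)
    apply (rule mids)
    done
qed

lemma reflA: "reflective (HA x y) (EA x y)"
  unfolding reflective_def
proof (intro ballI impI)
  fix u v assume u: "u \<in> (HA x y)" and v: "v \<in> (HA x y)" and e: "(EA x y) u v"
  have uv: "E u v" using e unfolding induced_def by simp
  obtain \<sigma> where "reflection V E u v \<sigma>" using ex_refl[OF uv] by blast
  then show "\<exists>\<phi>. reflection (HA x y) (EA x y) u v \<phi>" using sub_refl[OF u v uv] by blast
qed

end
end

theorem lemma2p9:
  fixes V :: "'a set" and E :: "'a \<Rightarrow> 'a \<Rightarrow> bool" and x y :: 'a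
  assumes "simple_graph V E" and "connected_graph V E" and "reflective V E"
    and "E x y"
  shows "convex_set V E (halfspace V E x y)
    \<and> reflective (halfspace V E x y) (induced E (halfspace V E x y))"
proof -
  interpret G: rg V E
    by unfold_locales (use assms in auto)
  obtain \<phi> where R: "reflection V E x y \<phi>" using G.ex_refl[OF assms(4)] by blast
  show ?thesis using G.convex[OF R assms(4)] G.reflA[OF R assms(4)] by blast
qed


end
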